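(* 1. If an infinite binary word $w$ is uniformly recurrent and of bounded width, then $w$ is bounded weak abelian periodic. 2. There exists an infinite binary uniformly recurrent word which is weak abelian periodic but not of bounded width.
   Context: For a finite word $u$, $|u|_a$ is the number of occurrences of the letter $a$ in $u$, and $\rho_a(u)=|u|_a/|u|$ for nonempty $u$. An infinite word $w$ over a finite alphabet $\Sigma$ is weak abelian periodic (WAP) if $w=v_0v_1v_2\cdots$ with $v_0$ finite and $v_1,v_2,\dots$ nonempty finite words such that $\rho_a(v_i)=\rho_a(v_j)$ for all $a\in\Sigma$ and all $i,j\ge1$; it is bounded WAP if such a factorization exists with $|v_i|\le C$ for all $i$, for some constant $C$. An infinite word is uniformly recurrent if every factor occurs infinitely often and with bounded gaps between consecutive occurrences. The graphic $g_w$ of a binary word $w=w_1w_2\cdots$ is the piecewise linear function with $g_w(n)=|w_1\cdots w_n|_1-|w_1\cdots w_n|_0$ for integers $n\ge0$ and linear in between (steps $(1,-1)$ for $0$ and $(1,1)$ for $1$). A binary infinite word $w$ is of bounded width if there exist rationals $a,b_1,b_2$ with $ax+b_1\le g_w(x)\le ax+b_2$ for all $x\ge0$. *)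

theory Defs
  imports Complex_Main
begin

text \<open>Infinite words over an alphabet 'a are functions nat => 'a (positions 0,1,2,...).
  Binary words are words over bool, the letter 1 being True and 0 being False.\<close>

definition cnt :: "(nat \<Rightarrow> 'a) \<Rightarrow> 'a \<Rightarrow> nat \<Rightarrow> nat \<Rightarrow> nat" where
  "cnt w a m n = card {k. m \<le> k \<and> k < n \<and> w k = a}"

text \<open>A factorization w = v0 v1 v2 ... is given by strictly increasing cut points p:
  v0 = w[0, p 0), and v(i+1) = w[p i, p (Suc i)) (nonempty since p is strictly increasing).\<close>
definition WAP :: "(nat \<Rightarrow> 'a) \<Rightarrow> bool" where
  "WAP w \<longleftrightarrow> (\<exists>p. strict_mono p \<and>
     (\<forall>a i j. real (cnt w a (p i) (p (Suc i))) / real (p (Suc i) - p i)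
             = real (cnt w a (p j) (p (Suc j))) / real (p (Suc j) - p j)))"

definition bounded_WAP :: "(nat \<Rightarrow> 'a) \<Rightarrow> bool" where
  "bounded_WAP w \<longleftrightarrow> (\<exists>p C. strict_mono p \<and>
     (\<forall>a i j. real (cnt w a (p i) (p (Suc i))) / real (p (Suc i) - p i)
             = real (cnt w a (p j) (p (Suc j))) / real (p (Suc j) - p j)) \<and>
     (\<forall>i. p (Suc i) - p i \<le> C))"

definition occurs_at :: "(nat \<Rightarrow> 'a) \<Rightarrow> 'a list \<Rightarrow> nat \<Rightarrow> bool" where
  "occurs_at w u i \<longleftrightarrow> (\<forall>j < length u. w (i + j) = u ! j)"

definition is_factor :: "(nat \<Rightarrow> 'a) \<Rightarrow> 'a list \<Rightarrow> bool" where
  "is_factor w u \<longleftrightarrow> (\<exists>i. occurs_at w u i)"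

definition uniformly_recurrent :: "(nat \<Rightarrow> 'a) \<Rightarrow> bool" where
  "uniformly_recurrent w \<longleftrightarrow> (\<forall>u. is_factor w u \<longrightarrow>
     infinite {i. occurs_at w u i} \<and>
     (\<exists>C. \<forall>i. occurs_at w u i \<longrightarrow> (\<exists>k. i < k \<and> k \<le> i + C \<and> occurs_at w u k)))"

definition graphic_nat :: "(nat \<Rightarrow> bool) \<Rightarrow> nat \<Rightarrow> int" where
  "graphic_nat w n = int (cnt w True 0 n) - int (cnt w False 0 n)"

text \<open>Piecewise linear interpolation, for x >= 0.\<close>
definition graphic :: "(nat \<Rightarrow> bool) \<Rightarrow> real \<Rightarrow> real" where
  "graphic w x = (let n = nat \<lfloor>x\<rfloor> in
     of_int (graphic_nat w n) + (x - real n) * of_int (graphic_nat w (Suc n) - graphic_nat w n))"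

definition bounded_width :: "(nat \<Rightarrow> bool) \<Rightarrow> bool" where
  "bounded_width w \<longleftrightarrow> (\<exists>a b1 b2 :: rat. \<forall>x :: real. x \<ge> 0 \<longrightarrow>
     of_rat a * x + of_rat b1 \<le> graphic w x \<and> graphic w x \<le> of_rat a * x + of_rat b2)"

end

theory Submission
  imports Defs "HOL-Library.Infinite_Set"
begin

lemma cnt_Suc: "m \<le> n \<Longrightarrow> cnt w a m (Suc n) = cnt w a m n + (if w n = a then 1 else 0)"
proof -
  assume mn: "m \<le> n"
  have fin: "finite {k. m \<le> k \<and> k < n \<and> w k = a}"
    by (rule finite_subset[of _ "{..<n}"]) auto
  show ?thesis
  proof (cases "w n = a")
    case True
    have "{k. m \<le> k \<and> k < Suc n \<and> w k = a} = insert n {k. m \<le> k \<and> k < n \<and> w k = a}"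
      using True mn by auto
    then show ?thesis using True fin by (simp add: cnt_def)
  next
    case False
    have "{k. m \<le> k \<and> k < Suc n \<and> w k = a} = {k. m \<le> k \<and> k < n \<and> w k = a}"
      using False mn less_Suc_eq by auto
    then show ?thesis using False by (simp add: cnt_def)
  qed
qed

lemma cnt_same[simp]: "cnt w a m m = 0"
  unfolding cnt_def by auto

lemma cnt_split: "m \<le> n \<Longrightarrow> n \<le> q \<Longrightarrow> cnt w a m q = cnt w a m n + cnt w a n q"
proof (induction q)
  case 0 then show ?case by simp
next
  case (Suc q)
  show ?case
  proof (cases "n = Suc q")
    case True then show ?thesis by simp
  next
    case False
    then have "n \<le> q" using Suc.prems by simp
    then show ?thesis using Suc cnt_Suc[of m q w a] cnt_Suc[of n q w a] by simp
  qed
qed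

lemma cnt_TF: "m \<le> n \<Longrightarrow> cnt w True m n + cnt w False m n = n - m"
proof (induction n)
  case 0 then show ?case by simp
next
  case (Suc n)
  show ?case
  proof (cases "m = Suc n")
    case True then show ?thesis by simp
  next
    case False
    then have "m \<le> n" using Suc.prems by simp
    then show ?thesis using Suc cnt_Suc[of m n w True] cnt_Suc[of m n w False] by (simp add: Suc_diff_le)
  qed
qed

lemma cnt_shift: "cnt w a m (m+L) = card {t. t < L \<and> w (m+t) = a}"
proof -
  have "{k. m \<le> k \<and> k < m+L \<and> w k = a} = (\<lambda>t. m+t) ` {t. t < L \<and> w (m+t) = a}"
    by (auto simp: image_iff) (metis add_diff_inverse_nat add_less_cancel_left not_less)+
  then show ?thesis unfolding cnt_def by (simp add: card_image)
qed

lemma graphic_nat_eq: "graphic_nat w n = 2 * int (cnt w True 0 n) - int n"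
  using cnt_TF[of 0 n w] unfolding graphic_nat_def by simp

lemma graphic_at_nat: "graphic w (real n) = of_int (graphic_nat w n)"
  unfolding graphic_def by simp

function tw :: "nat \<Rightarrow> bool" where
  "tw n = (if n = 0 then False else (tw (n div 3) \<noteq> (n mod 3 = 2)))"
  by auto
termination by (relation "measure id") auto

declare tw.simps[simp del]

lemma tw0[simp]: "tw 0 = False" by (subst tw.simps) simp

lemma tw3: "r < 3 \<Longrightarrow> tw (3*n + r) = (tw n \<noteq> (r = 2))"
proof (cases "3*n + r = 0")
  case True
  assume "r < 3" with True show ?thesis by simp
next
  case False
  assume "r < 3"
  then show ?thesis using False by (subst tw.simps) simp
qed

lemma tw_block: "t < 3^k \<Longrightarrow> tw (3^k*j + t) = (tw j \<noteq> tw t)"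
proof (induction k arbitrary: t)
  case 0 then show ?case by simp
next
  case (Suc k)
  have t: "t = 3*(t div 3) + t mod 3" by simp
  have lt: "t div 3 < 3^k" using Suc.prems by auto
  have eq: "3^(Suc k)*j + t = 3*(3^k*j + t div 3) + t mod 3" by simp
  have "tw (3^(Suc k)*j + t) = (tw (3^k*j + t div 3) \<noteq> (t mod 3 = 2))"
    unfolding eq by (rule tw3) simp
  also have "\<dots> = (tw j \<noteq> (tw (t div 3) \<noteq> (t mod 3 = 2)))" using Suc.IH[OF lt] by auto
  also have "(tw (t div 3) \<noteq> (t mod 3 = 2)) = tw t"
    using tw3[of "t mod 3" "t div 3"] by simp
  finally show ?case .
qed

lemma tw1: "tw 1 = False" using tw3[of 1 0] by simp
lemma tw2: "tw 2 = True" using tw3[of 2 0] by (simp add: numeral_2_eq_2)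
lemma tw_vals: "tw 1 = False" "tw 2 = True" "tw 3 = False" "tw 5 = True" "tw 6 = True"
  using tw3[of 0 1] tw3[of 2 1] tw3[of 0 2] tw1 tw2 by simp_all

lemma tw_pair: "\<exists>t<6. tw (9*m+t) = b \<and> tw (9*m+t+1) = c"
proof -
  have blk: "\<And>t. t < 9 \<Longrightarrow> tw (9*m+t) = (tw m \<noteq> tw t)"
    using tw_block[of _ 2 m] by simp
  have e: "tw (9*m+0) = tw m" "tw (9*m+1) = tw m" "tw (9*m+2) = (\<not> tw m)"
       "tw (9*m+3) = tw m" "tw (9*m+5) = (\<not> tw m)" "tw (9*m+6) = (\<not> tw m)"
    using blk[of 0] blk[of 1] blk[of 2] blk[of 3] blk[of 5] blk[of 6] tw_vals by auto
  have q: "9*m+0+1 = 9*m+1" "9*m+1+1 = 9*m+2" "9*m+2+1 = 9*m+3" "9*m+5+1 = 9*m+6" by simp_all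
  have c0: "tw (9*m+0) = tw m \<and> tw (9*m+0+1) = tw m" using e q by metis
  have c1: "tw (9*m+1) = tw m \<and> tw (9*m+1+1) = (\<not>tw m)" using e q by metis
  have c2: "tw (9*m+2) = (\<not>tw m) \<and> tw (9*m+2+1) = tw m" using e q by metis
  have c5: "tw (9*m+5) = (\<not>tw m) \<and> tw (9*m+5+1) = (\<not>tw m)" using e q by metis
  have "(b = tw m \<and> c = tw m) \<or> (b = tw m \<and> c = (\<not>tw m)) \<or> (b = (\<not>tw m) \<and> c = tw m) \<or> (b = (\<not>tw m) \<and> c = (\<not>tw m))"
    by blast
  then show ?thesis
  proof (elim disjE)
    assume "b = tw m \<and> c = tw m" then show ?thesis using c0 by (intro exI[of _ 0]) (simp only:, simp)
  next
    assume "b = tw m \<and> c = (\<not>tw m)" then show ?thesis using c1 by (intro exI[of _ 1]) (simp only:, simp)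
  next
    assume "b = (\<not>tw m) \<and> c = tw m" then show ?thesis using c2 by (intro exI[of _ 2]) (simp only:, simp)
  next
    assume "b = (\<not>tw m) \<and> c = (\<not>tw m)" then show ?thesis using c5 by (intro exI[of _ 5]) (simp only:, simp)
  qed
qed


lemma O3: "cnt tw True 0 (3*n) = n + cnt tw True 0 n"
proof (induction n)
  case 0 then show ?case by simp
next
  case (Suc n)
  have e: "3 * Suc n = Suc (Suc (Suc (3*n)))" by simp
  have a: "tw (3*n) = tw n" "tw (Suc (3*n)) = tw n" "tw (Suc (Suc (3*n))) = (\<not> tw n)"
    using tw3[of 0 n] tw3[of 1 n] tw3[of 2 n] by simp_all
  show ?case unfolding e using Suc a by (simp add: cnt_Suc)
qed

lemma O31: "cnt tw True 0 (3*n+1) = n + cnt tw True 0 n + (if tw n then 1 else 0)"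
  using O3[of n] tw3[of 0 n] by (simp add: cnt_Suc)

lemma g3: "graphic_nat tw (3*n) = graphic_nat tw n"
  using O3[of n] by (simp add: graphic_nat_eq)

lemma g31: "graphic_nat tw (3*n+1) = graphic_nat tw n + (if tw n then 1 else -1)"
  using O31[of n] by (simp add: graphic_nat_eq)

lemma g1: "graphic_nat tw 1 = -1"
proof -
  have "cnt tw True 0 1 = 0" using cnt_Suc[of 0 0 tw True] by simp
  then show ?thesis unfolding graphic_nat_eq by simp
qed

lemma gpow: "graphic_nat tw (3^k) = -1"
proof (induction k)
  case 0
  have "(3::nat)^0 = 1" by simp
  then show ?case using g1 by (simp only:)
next
  case (Suc k) then show ?case using g3[of "3^k"] by simp
qed

lemma Opow: "2 * cnt tw True 0 (3^k) + 1 = 3^k"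
proof -
  have "int (2 * cnt tw True 0 (3^k) + 1) = int (3^k)" using gpow[of k] unfolding graphic_nat_eq by simp
  then show ?thesis by (simp only: of_nat_eq_iff)
qed

primrec ms :: "nat \<Rightarrow> nat" where
  "ms 0 = 2" | "ms (Suc k) = 3 * ms k + 1"

lemma ms_tw: "tw (ms k)"
proof (induction k)
  case 0 then show ?case by (simp add: tw2)
next
  case (Suc k) then show ?case using tw3[of 1 "ms k"] by simp
qed

lemma g2: "graphic_nat tw 2 = -2"
proof -
  have "cnt tw True 0 2 = 0"
    using cnt_Suc[of 0 0 tw True] cnt_Suc[of 0 1 tw True] tw1 by (simp add: numeral_2_eq_2)
  then show ?thesis by (simp add: graphic_nat_eq)
qed

lemma ms_g: "graphic_nat tw (ms k) = int k - 2"
proof (induction k)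
  case 0 then show ?case by (simp add: g2)
next
  case (Suc k) then show ?case using g31[of "ms k"] ms_tw[of k] by simp
qed

lemma tw_WAP: "WAP tw"
proof -
  define p where "p i = (3::nat)^(i+1)" for i
  have sm: "strict_mono p" unfolding p_def by (intro strict_monoI) (simp add: power_strict_increasing)
  have cT: "cnt tw True (p i) (p (Suc i)) = 3^(i+1)" for i
  proof -
    have "cnt tw True 0 (p (Suc i)) = cnt tw True 0 (p i) + cnt tw True (p i) (p (Suc i))"
      using sm by (intro cnt_split) (auto simp: strict_mono_less_eq)
    moreover have "2 * cnt tw True 0 (p i) + 1 = 3^(i+1)" "2 * cnt tw True 0 (p (Suc i)) + 1 = 3 * 3^(i+1)"
      unfolding p_def using Opow[of "i+1"] Opow[of "Suc i + 1"] by simp_all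
    ultimately show ?thesis by simp
  qed
  have len: "p (Suc i) - p i = 2 * 3^(i+1)" for i unfolding p_def by simp
  have cF: "cnt tw False (p i) (p (Suc i)) = 3^(i+1)" for i
    using cnt_TF[of "p i" "p (Suc i)" tw] cT[of i] len[of i] sm
    by (simp add: strict_mono_less_eq)
  have r: "real (cnt tw a (p i) (p (Suc i))) / real (p (Suc i) - p i) = 1/2" for a i
    by (cases a) (simp_all add: cT cF len)
  show ?thesis unfolding WAP_def using sm r by (intro exI[of _ p] conjI) (auto simp only: r)
qed

lemma tw_not_bw: "\<not> bounded_width tw"
proof
  assume "bounded_width tw"
  then obtain a b1 b2 :: rat where H: "\<And>x::real. x \<ge> 0 \<Longrightarrow>
     of_rat a * x + of_rat b1 \<le> graphic tw x \<and> graphic tw x \<le> of_rat a * x + of_rat b2"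
    unfolding bounded_width_def by blast
  have Hn: "of_rat a * real n + of_rat b1 \<le> of_int (graphic_nat tw n) \<and> of_int (graphic_nat tw n) \<le> of_rat a * real n + of_rat b2" for n
    using H[of "real n"] by (simp add: graphic_at_nat)
  have P: "of_rat a * real (3^k) + of_rat b1 \<le> -1 \<and> -1 \<le> of_rat a * real (3^k) + (of_rat b2::real)" for k
    using Hn[of "3^k"] gpow[of k] by simp
  have big: "\<exists>k. y < real ((3::nat)^k)" for y :: real
  proof -
    obtain n :: nat where "y < real n" using reals_Archimedean2 by blast
    moreover have "n < 3^n" by (induction n) auto
    ultimately show ?thesis by (metis of_nat_less_iff order.strict_trans)
  qed
  have a0: "(of_rat a :: real) = 0"
  proof (rule ccontr)
    assume ne: "(of_rat a :: real) \<noteq> 0"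
    show False
    proof (cases "(of_rat a :: real) > 0")
      case True
      obtain k where k: "(-1 - of_rat b1) / of_rat a < real ((3::nat)^k)" using big by blast
      then have "-1 - of_rat b1 < of_rat a * real ((3::nat)^k)" using True by (simp add: field_simps)
      then show False using P[of k] by simp
    next
      case False
      then have neg: "(of_rat a :: real) < 0" using ne by simp
      obtain k where k: "(1 + of_rat b2) / (- of_rat a) < real ((3::nat)^k)" using big by blast
      then have "1 + of_rat b2 < - of_rat a * real ((3::nat)^k)" using neg by (simp add: field_simps)
      then show False using P[of k] by simp
    qed
  qed
  obtain k :: nat where k: "of_rat b2 + 2 < real k" using reals_Archimedean2 by blast
  have "of_int (graphic_nat tw (ms k)) \<le> (of_rat b2 :: real)" using Hn[of "ms k"] a0 by simp
  then show False using k ms_g[of k] by simp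
qed

lemma tw_window: "tw j' = tw j \<Longrightarrow> tw (Suc j') = tw (Suc j) \<Longrightarrow> d < 2*3^k \<Longrightarrow>
   tw (3^k*j + d) = tw (3^k*j' + d)"
proof (cases "d < 3^k")
  case True
  assume "tw j' = tw j"
  then show ?thesis using tw_block[OF True] by simp
next
  case False
  assume a: "tw (Suc j') = tw (Suc j)" "d < 2*3^k"
  define e where "e = d - 3^k"
  have e: "e < 3^k" "3^k*j + d = 3^k * Suc j + e" "3^k*j' + d = 3^k * Suc j' + e"
    using False a unfolding e_def by auto
  have x: "tw (3^k*j + d) = (tw (Suc j) \<noteq> tw e)" unfolding e(2) by (rule tw_block[OF e(1)])
  have y: "tw (3^k*j' + d) = (tw (Suc j') \<noteq> tw e)" unfolding e(3) by (rule tw_block[OF e(1)])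
  show ?thesis using x y a by simp
qed

lemma tw_occ: "occurs_at tw u i \<Longrightarrow> length u \<le> 3^k \<Longrightarrow> tw j' = tw (i div 3^k) \<Longrightarrow>
   tw (Suc j') = tw (Suc (i div 3^k)) \<Longrightarrow> occurs_at tw u (3^k*j' + i mod 3^k)"
  unfolding occurs_at_def
proof (intro allI impI)
  fix q assume o: "\<forall>j<length u. tw (i + j) = u ! j" and l: "length u \<le> 3^k"
    and p: "tw j' = tw (i div 3^k)" "tw (Suc j') = tw (Suc (i div 3^k))" and q: "q < length u"
  have "i mod 3^k < 3^k" by simp
  then have d: "i mod 3^k + q < 2*3^k" using q l by linarith
  have "i + q = 3^k*(i div 3^k) + (i mod 3^k + q)" by simp
  then have "tw (i+q) = tw (3^k*j' + (i mod 3^k + q))"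
    using tw_window[OF p d] by simp
  then show "tw (3^k*j' + i mod 3^k + q) = u ! q" using o q by (simp add: add.assoc)
qed

lemma aux_arith: "(i::nat) = K*j + r \<Longrightarrow> r < K \<Longrightarrow> K*(j+1) \<le> K*(9*m) \<Longrightarrow> K*(9*m+7) \<le> K*(j+16) \<Longrightarrow>
   K*(9*m) \<le> i' \<Longrightarrow> i' < K*(9*m+6)+K \<Longrightarrow> i < i' \<and> i' \<le> i + 16*K"
  by (simp add: algebra_simps)

lemma tw_UR: "uniformly_recurrent tw"
  unfolding uniformly_recurrent_def
proof (intro allI impI conjI)
  fix u :: "bool list" assume "is_factor tw u"
  then obtain i0 where i0: "occurs_at tw u i0" unfolding is_factor_def by blast
  define k where "k = length u"
  have lk: "length u \<le> 3^k" unfolding k_def by (induction "length u") auto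
  have gen: "\<exists>i'. occurs_at tw u i' \<and> 3^k*(9*m) \<le> i' \<and> i' < 3^k*(9*m+6) + 3^k" if "occurs_at tw u i" for i m
  proof -
    obtain t where t: "t < 6" "tw (9*m+t) = tw (i div 3^k)" "tw (9*m+t+1) = tw (Suc (i div 3^k))"
      using tw_pair[of m "tw (i div 3^k)" "tw (Suc (i div 3^k))"] by blast
    have oc: "occurs_at tw u (3^k*(9*m+t) + i mod 3^k)"
      using tw_occ[OF that lk t(2)] t(3) by simp
    have "i mod 3^k < 3^k" by simp
    moreover have "(3::nat)^k*t \<le> 3^k*5" using t(1) by simp
    moreover have "3^k*(9*m+t) = 3^k*(9*m) + 3^k*t" "3^k*(9*m+6) + 3^k = 3^k*(9*m) + 3^k*7"
      by (simp_all add: algebra_simps)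
    ultimately have b: "3^k*(9*m+t) + i mod 3^k < 3^k*(9*m+6) + 3^k" by linarith
    have c: "3^k*(9*m) \<le> 3^k*(9*m+t) + i mod 3^k"
      by (metis add_le_mono1 le_add1 mult_le_mono2 trans_le_add1)
    show ?thesis using oc b c
      by (intro exI[of _ "3^k*(9*m+t) + i mod 3^k"]) auto
  qed
  show "infinite {i. occurs_at tw u i}"
    unfolding infinite_nat_iff_unbounded_le
  proof
    fix N
    obtain i' where "occurs_at tw u i'" "3^k*(9*N) \<le> i'" using gen[OF i0, of N] by blast
    moreover have "N \<le> 3^k*(9*N)"
    proof -
      have "(1::nat) \<le> 3^k" by simp
      then have "1*(9*N) \<le> 3^k*(9*N)" by (rule mult_le_mono1)
      then show ?thesis by simp
    qed
    ultimately show "\<exists>n\<ge>N. n \<in> {i. occurs_at tw u i}" by (blast intro: le_trans)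
  qed
  show "\<exists>C. \<forall>i. occurs_at tw u i \<longrightarrow> (\<exists>k'. i < k' \<and> k' \<le> i + C \<and> occurs_at tw u k')"
  proof (rule exI[of _ "16*3^k"], intro allI impI)
    fix i assume oi: "occurs_at tw u i"
    define j where "j = i div 3^k"
    define m where "m = j div 9 + 1"
    obtain i' where i': "occurs_at tw u i'" "3^k*(9*m) \<le> i'" "i' < 3^k*(9*m+6) + 3^k"
      using gen[OF oi, of m] by blast
    have im: "i = 3^k*j + i mod 3^k" unfolding j_def by simp
    have mlt: "i mod 3^k < 3^k" by simp
    have j1: "j+1 \<le> 9*m" unfolding m_def by simp
    have j2: "9*m+7 \<le> j + 16" unfolding m_def by simp
    have A: "3^k*(j+1) \<le> 3^k*(9*m)" using j1 by (rule mult_le_mono2)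
    have B: "3^k*(9*m+7) \<le> 3^k*(j+16)" using j2 by (rule mult_le_mono2)
    have D: "3^k*(j+1) = 3^k*j + 3^k" "3^k*(9*m+6)+3^k = 3^k*(9*m+7)" "3^k*(j+16) = 3^k*j + 16*3^k"
      by (simp_all add: algebra_simps)
    have "i < i' \<and> i' \<le> i + 16*3^k" using aux_arith[OF im mlt A B i'(2,3)] .
    then have "i < i'" "i' \<le> i + 16*3^k" by simp_all
    then show "\<exists>k'. i < k' \<and> k' \<le> i + 16*3^k \<and> occurs_at tw u k'"
      using i'(1) by blast
  qed
qed


lemma eventually_recurrent_values:
  fixes f :: "nat \<Rightarrow> int"
  assumes F: "finite F" and rng: "\<And>n. f n \<in> F"
  shows "\<exists>N. \<forall>n\<ge>N. infinite {m. f m = f n}"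
proof -
  define B where "B = {v \<in> F. finite {n. f n = v}}"
  have "finite (\<Union>v\<in>B. {n. f n = v})" using F unfolding B_def by auto
  then obtain N where N: "\<And>n. n \<in> (\<Union>v\<in>B. {n. f n = v}) \<Longrightarrow> n < N"
    by (metis finite_nat_set_iff_bounded)
  show ?thesis
  proof (intro exI allI impI)
    fix n assume "N \<le> n"
    then have "f n \<notin> B" using N by force
    then show "infinite {m. f m = f n}" using rng unfolding B_def by auto
  qed
qed

lemma part1:
  fixes w :: "nat \<Rightarrow> bool"
  assumes ur: "uniformly_recurrent w" and bw: "bounded_width w"
  shows "bounded_WAP w"
proof -
  obtain a b1 b2 :: rat where Hx: "\<And>x::real. x \<ge> 0 \<Longrightarrow>
     of_rat a * x + of_rat b1 \<le> graphic w x \<and> graphic w x \<le> of_rat a * x + of_rat b2"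
    using bw unfolding bounded_width_def by blast
  define Oc where "Oc n = cnt w True 0 n" for n
  have Hn: "of_rat a * real n + of_rat b1 \<le> 2 * real (Oc n) - real n \<and> 2 * real (Oc n) - real n \<le> of_rat a * real n + of_rat b2" for n
    using Hx[of "real n"] unfolding Oc_def by (simp add: graphic_at_nat graphic_nat_eq)
  define q where "q = (1 + a) / 2"
  obtain r s where rs: "quotient_of q = (r, s)" by (cases "quotient_of q") auto
  have s0: "s > 0" using quotient_of_denom_pos[OF rs] .
  have qrs: "q = of_int r / of_int s" using quotient_of_div[OF rs] .
  define S where "S = real_of_int s"
  define R where "R = real_of_int r"
  define \<alpha> where "\<alpha> = (of_rat a :: real)"
  have S0: "S > 0" unfolding S_def using s0 by simp
  have "(of_rat q :: real) = R / S" unfolding qrs R_def S_def by (simp add: of_rat_divide)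
  moreover have "(of_rat q :: real) = (1 + \<alpha>) / 2" unfolding q_def \<alpha>_def by (simp add: of_rat_divide of_rat_add)
  ultimately have Rval: "R = S * (1 + \<alpha>) / 2" using S0 by (simp add: field_simps)
  define H where "H n = s * int (Oc n) - r * int n" for n
  have Hreal: "real_of_int (H n) = S / 2 * (2 * real (Oc n) - real n - \<alpha> * real n)" for n
  proof -
    have e: "R * real n = S/2 * real n + \<alpha> * (S/2 * real n)" unfolding Rval by (simp add: field_simps)
    show ?thesis unfolding H_def using e unfolding S_def R_def by (simp add: algebra_simps)
  qed
  define lo where "lo = \<lfloor>S * of_rat b1 / 2\<rfloor>"
  define hi where "hi = \<lceil>S * of_rat b2 / 2\<rceil>"
  have Hb: "H n \<in> {lo..hi}" for n
  proof -
    have "of_rat b1 \<le> 2 * real (Oc n) - real n - \<alpha> * real n"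
         "2 * real (Oc n) - real n - \<alpha> * real n \<le> of_rat b2"
      using Hn[of n] unfolding \<alpha>_def by linarith+
    then have "S / 2 * of_rat b1 \<le> real_of_int (H n)" "real_of_int (H n) \<le> S / 2 * of_rat b2"
      unfolding Hreal using S0 by (simp_all add: mult_left_mono)
    then have "S * of_rat b1 / 2 \<le> real_of_int (H n)" "real_of_int (H n) \<le> S * of_rat b2 / 2" by simp_all
    then show ?thesis unfolding lo_def hi_def by (simp add: floor_le_iff le_ceiling_iff)
  qed
  obtain N where N: "\<And>n. n \<ge> N \<Longrightarrow> infinite {m. H m = H n}"
    using eventually_recurrent_values[of "{lo..hi}" H] Hb by blast
  define V where "V = {v. infinite {n. H n = v}}"
  have VF: "V \<subseteq> {lo..hi}"
  proof
    fix v assume "v \<in> V"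
    then have "{n. H n = v} \<noteq> {}" unfolding V_def by (intro notI) simp
    then show "v \<in> {lo..hi}" using Hb by auto
  qed
  have finV: "finite V" using VF finite_subset by blast
  have HV: "H n \<in> V" if "n \<ge> N" for n using N[OF that] unfolding V_def by simp
  have nV: "V \<noteq> {}" using HV[of N] by auto
  define mm where "mm = Min V"
  define MM where "MM = Max V"
  have bnd: "mm \<le> H n \<and> H n \<le> MM" if "n \<ge> N" for n
    using HV[OF that] finV unfolding mm_def MM_def by simp
  have "mm \<in> V" unfolding mm_def using finV nV by simp
  then obtain i0 where i0: "i0 \<ge> N" "H i0 = mm"
    unfolding V_def infinite_nat_iff_unbounded_le by blast
  have "MM \<in> V" unfolding MM_def using finV nV by simp
  then obtain j0 where j0: "j0 \<ge> Suc i0" "H j0 = MM"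
    unfolding V_def infinite_nat_iff_unbounded_le by blast
  define L where "L = j0 - i0"
  have L0: "L > 0" and j0L: "j0 = i0 + L" using j0 unfolding L_def by auto
  define u where "u = map w [i0..<j0]"
  have lu: "length u = L" unfolding u_def L_def by simp
  have occ0: "occurs_at w u i0" unfolding occurs_at_def u_def L_def by simp
  then have "is_factor w u" unfolding is_factor_def by blast
  then obtain C where C: "\<And>i. occurs_at w u i \<Longrightarrow> \<exists>k. i < k \<and> k \<le> i + C \<and> occurs_at w u k"
    using ur unfolding uniformly_recurrent_def by blast
  have cnt_occ: "cnt w True i (i+L) = cnt w True i0 (i0+L)" if "occurs_at w u i" for i
  proof -
    have "{t. t < L \<and> w (i+t) = True} = {t. t < L \<and> w (i0+t) = True}"
      using that occ0 lu unfolding occurs_at_def by auto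
    then show ?thesis by (simp add: cnt_shift)
  qed
  have Hstep: "H (i+L) = H i + (MM - mm)" if "occurs_at w u i" for i
  proof -
    have gen: "H (k+L) = H k + s * int (cnt w True k (k+L)) - r * int L" for k
      using cnt_split[of 0 k "k+L" w True] unfolding H_def Oc_def by (simp add: algebra_simps)
    show ?thesis using gen[of i] gen[of i0] cnt_occ[OF that] i0(2) j0(2) j0L by simp
  qed
  have HM: "H (i+L) = MM" if "occurs_at w u i" "i \<ge> N" for i
    using Hstep[OF that(1)] bnd[OF that(2)] bnd[of "i+L"] that(2) by force
  define nxt where "nxt i = (SOME k. i < k \<and> k \<le> i + C \<and> occurs_at w u k)" for i
  have nxt: "i < nxt i \<and> nxt i \<le> i + C \<and> occurs_at w u (nxt i)" if "occurs_at w u i" for i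
    unfolding nxt_def using someI_ex[OF C[OF that]] .
  define qq where "qq n = rec_nat i0 (\<lambda>_ x. nxt x) n" for n
  have qq0: "qq 0 = i0" and qqS: "qq (Suc n) = nxt (qq n)" for n unfolding qq_def by simp_all
  have qocc: "occurs_at w u (qq n)" for n
    by (induction n) (simp_all add: qq0 qqS occ0 nxt)
  have qinc: "qq n < qq (Suc n) \<and> qq (Suc n) \<le> qq n + C" for n
    using nxt[OF qocc[of n]] qqS by simp
  have qN: "qq n \<ge> N" for n
  proof (induction n)
    case 0 then show ?case using qq0 i0 by simp
  next
    case (Suc n) then show ?case using qinc[of n] by simp
  qed
  define p where "p n = qq n + L" for n
  have sm: "strict_mono p" unfolding p_def using qinc unfolding strict_mono_Suc_iff by simp
  have pM: "H (p n) = MM" for n unfolding p_def using HM[OF qocc qN] .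
  have gap: "p (Suc i) - p i \<le> C" for i unfolding p_def using qinc[of i] by linarith
  define c where "c x = (if x then R / S else 1 - R / S)" for x
  have ratio: "real (cnt w x (p i) (p (Suc i))) / real (p (Suc i) - p i) = c x" for x i
  proof -
    define d where "d = p (Suc i) - p i"
    define T where "T = cnt w True (p i) (p (Suc i))"
    have le: "p i \<le> p (Suc i)" and d0: "d > 0" using sm unfolding d_def by (simp_all add: strict_mono_less_eq strict_mono_Suc_iff)
    have "Oc (p (Suc i)) = Oc (p i) + T" unfolding Oc_def T_def using cnt_split[OF _ le, of 0 w True] by simp
    then have "s * int T = r * int d" using pM[of i] pM[of "Suc i"] le unfolding H_def d_def
      by (simp add: algebra_simps of_nat_diff)
    then have "real_of_int (s * int T) = real_of_int (r * int d)" by (simp only:)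
    then have "S * real T = R * real d" unfolding S_def R_def by simp
    then have rT: "real T / real d = R / S" using S0 d0 by (simp add: field_simps)
    have TF: "T + cnt w False (p i) (p (Suc i)) = d" unfolding T_def d_def using cnt_TF[OF le] .
    show ?thesis
    proof (cases x)
      case True then show ?thesis using rT unfolding c_def T_def d_def by simp
    next
      case False
      have "real (cnt w False (p i) (p (Suc i))) = real d - real T" using TF by simp
      then have "real (cnt w False (p i) (p (Suc i))) / real d = 1 - real T / real d"
        using d0 by (simp add: field_simps)
      then show ?thesis using rT False unfolding c_def d_def by simp
    qed
  qed
  show ?thesis unfolding bounded_WAP_def
    using sm ratio gap by (intro exI[of _ p] exI[of _ C] conjI) auto
qed


theorem proposition2:
  shows "(\<forall>w :: nat \<Rightarrow> bool. uniformly_recurrent w \<and> bounded_width w \<longrightarrow> bounded_WAP w) \<and>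
         (\<exists>w :: nat \<Rightarrow> bool. uniformly_recurrent w \<and> WAP w \<and> \<not> bounded_width w)"
  using part1 tw_UR tw_WAP tw_not_bw by blast

end
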